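(* Let $G$ be a graph with finite edge set $E(G)$, and let $x$ be fixed. Suppose $p(F,x)$, $F\subseteq E(G)$, are numbers for which there exist a finite measure space $(\Omega,\mathscr{A},\mu)$ and measurable sets $\{A_e\}_{e\in E(G)}$ with $\mu\big(\bigcap_{e\in F}A_e\big)=p(F,x)$ for every $F\subseteq E(G)$ (the empty intersection being $\Omega$), and let $$P(G,x)=\sum_{F\subseteq E(G)}(-1)^{|F|}p(F,x).$$ Call a pair $\{B,\{b\}\}$ with $B\subseteq E(G)$ and $b\in E(G)\setminus B$ a broken pair of $P(G,x)$ if $p(B,x)=p(B\cup\{b\},x)$. Let $\{B_1,B^*_1\},\dots,\{B_k,B^*_k\}$ be broken pairs of $P(G,x)$ (so each $B^*_i=\{b_i\}$ is a single edge not in $B_i$ with $p(B_i,x)=p(B_i\cup\{b_i\},x)$). For $i\in\{1,\dots,k\}$ put $$\mathscr{B}_i=\{F\subseteq E(G):\ F\supseteq B_i,\ \text{and } F\not\supseteq B_j\setminus B^*_i \text{ for every } j<i\},$$ and $\mathscr{B}=\mathscr{B}_1\cup\cdots\cup\mathscr{B}_k$. Then $$P(G,x)=\sum_{F\in 2^{E(G)}\setminus\mathscr{B}}(-1)^{|F|}p(F,x).$$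
   Context: $2^{E(G)}$ denotes the power set of $E(G)$. In the paper, a graph polynomial written in inclusion–exclusion form $P(G,x)=\sum_{F\subseteq E(G)}(-1)^{|F|}p(F,x)$ is interpreted by setting $\mu(\bigcap_{e\in F}A_e)=p(F,x)$; this representation is part of the hypotheses here. *)

theory Defs
  imports "HOL-Analysis.Analysis"
begin

definition graph_poly :: "'e set \<Rightarrow> ('e set \<Rightarrow> 'x \<Rightarrow> real) \<Rightarrow> 'x \<Rightarrow> real" where
  "graph_poly E p x = (\<Sum>F\<in>Pow E. (-1) ^ card F * p F x)"

definition broken_pair :: "'e set \<Rightarrow> ('e set \<Rightarrow> 'x \<Rightarrow> real) \<Rightarrow> 'x \<Rightarrow> 'e set \<Rightarrow> 'e \<Rightarrow> bool" where
  "broken_pair E p x B b \<longleftrightarrow> B \<subseteq> E \<and> b \<in> E - B \<and> p B x = p (insert b B) x"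

definition broken_family :: "'e set \<Rightarrow> (nat \<Rightarrow> 'e set) \<Rightarrow> (nat \<Rightarrow> 'e) \<Rightarrow> nat \<Rightarrow> 'e set set" where
  "broken_family E B b i = {F. F \<subseteq> E \<and> B i \<subseteq> F \<and> (\<forall>j\<in>{1..<i}. \<not> (B j - {b i} \<subseteq> F))}"

end

theory Submission
  imports Defs
begin

lemma meas_set:
  assumes "finite F" "\<forall>e\<in>F. A e \<in> sets M"
  shows "space M \<inter> (\<Inter>e\<in>F. A e) \<in> sets M"
proof (cases "F = {}")
  case True then show ?thesis by simp
next
  case False
  have "(\<Inter>e\<in>F. A e) \<in> sets M" using assms False by (intro sets.finite_INT) auto
  then show ?thesis by auto
qed

lemma key_meas:
  assumes "finite_measure M" "X \<in> sets M" "Y \<in> sets M" "measure M X = measure M (X \<inter> Y)"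
    "Z \<subseteq> X" "Z \<in> sets M"
  shows "measure M Z = measure M (Z \<inter> Y)"
proof -
  interpret finite_measure M by fact
  have "measure M (X - Y) = 0" using finite_measure_Diff'[OF assms(2,3)] assms(4) by simp
  moreover have "measure M (Z - Y) \<le> measure M (X - Y)"
    using assms by (intro finite_measure_mono) auto
  ultimately have "measure M (Z - Y) = 0" using measure_nonneg[of M "Z - Y"] by linarith
  then show ?thesis using finite_measure_Diff'[OF assms(6,3)] by simp
qed

theorem corollary1:
  fixes E :: "'e set" and p :: "'e set \<Rightarrow> 'x \<Rightarrow> real" and x :: 'x
    and M :: "'w measure" and A :: "'e \<Rightarrow> 'w set"
    and k :: nat and B :: "nat \<Rightarrow> 'e set" and b :: "nat \<Rightarrow> 'e"
  assumes "finite E"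
    and "finite_measure M"
    and "\<forall>e\<in>E. A e \<in> sets M"
    and "\<forall>F\<subseteq>E. p F x = measure M (space M \<inter> (\<Inter>e\<in>F. A e))"
    and "\<forall>i\<in>{1..k}. broken_pair E p x (B i) (b i)"
  shows "graph_poly E p x
           = (\<Sum>F\<in>Pow E - (\<Union>i\<in>{1..k}. broken_family E B b i). (-1) ^ card F * p F x)"
proof -
  define f where "f F = (-1::real) ^ card F * p F x" for F
  define U where "U = (\<Union>i\<in>{1..k}. broken_family E B b i)"
  have BsubE: "broken_family E B b i \<subseteq> Pow E" for i unfolding broken_family_def by auto
  have UE: "U \<subseteq> Pow E" using BsubE unfolding U_def by auto
  have finS: "finite (broken_family E B b i)" for i
    using BsubE assms(1) by (meson finite_Pow_iff finite_subset)
  have pins: "p (insert (b i) F) x = p F x" if i: "i \<in> {1..k}" and F: "F \<subseteq> E" "B i \<subseteq> F" for i F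
  proof -
    have bp: "B i \<subseteq> E" "b i \<in> E" "p (B i) x = p (insert (b i) (B i)) x"
      using assms(5) i unfolding broken_pair_def by auto
    define X where "X = space M \<inter> (\<Inter>e\<in>B i. A e)"
    define Z where "Z = space M \<inter> (\<Inter>e\<in>F. A e)"
    have fB: "finite (B i)" "finite F" using bp(1) F(1) assms(1) by (auto intro: finite_subset)
    have XS: "X \<in> sets M" unfolding X_def using bp(1) assms(3) by (intro meas_set[OF fB(1)]) auto
    have ZS: "Z \<in> sets M" unfolding Z_def using F(1) assms(3) by (intro meas_set[OF fB(2)]) auto
    have YS: "A (b i) \<in> sets M" using bp assms(3) by auto
    have e1: "space M \<inter> (\<Inter>e\<in>insert (b i) (B i). A e) = X \<inter> A (b i)" unfolding X_def by auto
    have e2: "space M \<inter> (\<Inter>e\<in>insert (b i) F. A e) = Z \<inter> A (b i)" unfolding Z_def by auto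
    have "measure M X = measure M (X \<inter> A (b i))"
      using bp assms(4) e1 unfolding X_def by (metis insert_subset)
    moreover have "Z \<subseteq> X" unfolding X_def Z_def using F by auto
    ultimately have "measure M Z = measure M (Z \<inter> A (b i))"
      using key_meas[OF assms(2) XS YS _ _ ZS] by blast
    then show ?thesis using assms(4) F bp e2 unfolding Z_def by (metis insert_subset)
  qed
  have zero: "sum f (broken_family E B b i) = 0" if i: "i \<in> {1..k}" for i
  proof -
    define S where "S = broken_family E B b i"
    define S0 where "S0 = {F\<in>S. b i \<notin> F}"
    define S1 where "S1 = {F\<in>S. b i \<in> F}"
    have bp: "B i \<subseteq> E" "b i \<in> E" "b i \<notin> B i"
      using assms(5) i unfolding broken_pair_def by auto
    have finS': "finite S" using finS S_def by auto
    have un: "S = S0 \<union> S1" "S0 \<inter> S1 = {}" unfolding S0_def S1_def by auto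
    have fin01: "finite S0" "finite S1" using finS' unfolding S0_def S1_def by auto
    have split: "sum f S = sum f S0 + sum f S1"
      using sum.union_disjoint[OF fin01 un(2)] un(1) by simp
    have img: "S1 = insert (b i) ` S0"
    proof
      show "insert (b i) ` S0 \<subseteq> S1"
        using bp unfolding S0_def S1_def S_def broken_family_def by auto
      show "S1 \<subseteq> insert (b i) ` S0"
      proof
        fix F assume F: "F \<in> S1"
        then have "F - {b i} \<in> S0"
          using bp unfolding S0_def S1_def S_def broken_family_def by auto
        moreover have "F = insert (b i) (F - {b i})" using F unfolding S1_def by auto
        ultimately show "F \<in> insert (b i) ` S0" by blast
      qed
    qed
    have inj: "inj_on (insert (b i)) S0" unfolding S0_def inj_on_def by (metis Diff_insert_absorb mem_Collect_eq)
    have neg: "f (insert (b i) F) = - f F" if F: "F \<in> S0" for F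
    proof -
      have FS: "F \<subseteq> E" "B i \<subseteq> F" "b i \<notin> F"
        using F unfolding S0_def S_def broken_family_def by auto
      then have "finite F" using assms(1) finite_subset by auto
      then have "card (insert (b i) F) = Suc (card F)" using FS by simp
      then show ?thesis unfolding f_def using pins[OF i FS(1,2)] by simp
    qed
    have "sum f S1 = sum (\<lambda>F. - f F) S0"
      unfolding img sum.reindex[OF inj] using neg by (simp add: o_def)
    then show ?thesis using split S_def by (simp add: sum_negf)
  qed
  have disj: "\<forall>i\<in>{1..k}. \<forall>j\<in>{1..k}. i \<noteq> j \<longrightarrow> broken_family E B b i \<inter> broken_family E B b j = {}"
  proof (intro ballI impI)
    fix i j assume ij: "i \<in> {1..k}" "j \<in> {1..k}" "i \<noteq> j"
    show "broken_family E B b i \<inter> broken_family E B b j = {}"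
    proof (cases "j < i")
      case True then show ?thesis using ij unfolding broken_family_def by auto
    next
      case False then have "i < j" using ij by auto
      then show ?thesis using ij unfolding broken_family_def by auto
    qed
  qed
  have "sum f U = (\<Sum>i\<in>{1..k}. sum f (broken_family E B b i))"
    unfolding U_def by (rule sum.UNION_disjoint) (use finS disj in auto)
  also have "\<dots> = 0" using zero by simp
  finally have U0: "sum f U = 0" .
  have finP: "finite (Pow E)" using assms(1) by simp
  have "sum f (Pow E) = sum f (Pow E - U) + sum f U"
    using sum.subset_diff[OF UE finP] by simp
  then show ?thesis unfolding graph_poly_def f_def[symmetric] U_def[symmetric] using U0 by simp
qed

end
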